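(* Let $n\geq 3$, $q\geq 1$ with $\gcd(q,n-1)=1$, $k=-n+\frac{n-1}{q}$, and $\beta_0=q\delta-\theta$. Then there is an isomorphism of Coxeter systems $\sigma:(\widehat W,S)\to(\widehat W(k\Lambda_0),S(k\Lambda_0))$ with $\sigma(s_{\alpha_0})=s_{\beta_0}$ and $\sigma(s_{\alpha_i})=s_{\alpha_i}$ for $i=1,\dots,n-1$. In particular $\sigma(\widehat W_0(-\Lambda_0))=\widehat W_0(k\Lambda_0)$.
   Context: Affine $\widehat{sl}_n$ with simple roots $\alpha_0=\delta-\theta,\alpha_1,\dots,\alpha_{n-1}$ ($\theta$ the highest root of $sl_n$, $\delta$ the primitive positive imaginary root), invariant form $(\cdot|\cdot)$, real roots $\widehat\Delta^{re}$, $\alpha^\vee=2\alpha/(\alpha|\alpha)$, reflections $s_\alpha$; $\Lambda_0$ is the fundamental weight with $\Lambda_0(\alpha_j^\vee)=\delta_{0j}$, and $\widehat\rho$ satisfies $(\widehat\rho|\alpha_i^\vee)=1$ for all $i$. $\widehat W$ is the affine Weyl group with $S=\{s_{\alpha_0},\dots,s_{\alpha_{n-1}}\}$. For $\lambda$, $\widehat\Delta(\lambda)=\{\alpha\in\widehat\Delta^{re}:(\lambda+\widehat\rho|\alpha^\vee)\in\mathbb Z\}$ and $\widehat\Delta_0(\lambda)=\{\alpha\in\widehat\Delta^{re}:(\lambda+\widehat\rho|\alpha^\vee)=0\}$; $\widehat W(\lambda)$ (resp. $\widehat W_0(\lambda)$) is the group generated by reflections in $\widehat\Delta(\lambda)$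 (resp. $\widehat\Delta_0(\lambda)$), and $S(\lambda)=\{s_\alpha:\alpha\text{ simple in }\widehat\Delta^+(\lambda)\}$, so $(\widehat W(\lambda),S(\lambda))$ is a Coxeter system. Here the simple roots of $\widehat\Delta(k\Lambda_0)$ are $\beta_0,\alpha_1,\dots,\alpha_{n-1}$, $\widehat W_0(k\Lambda_0)=\{e,s_{\beta_0}\}$ and $\widehat W_0(-\Lambda_0)=\{e,s_{\alpha_0}\}$. *)

theory Defs
  imports Complex_Main
begin

text \<open>Concrete model of the (real) weight space of affine sl_n (with derivation):
  a triple (a, v, d) stands for  a Lambda_0 + v + d delta, where v : nat => real is the
  finite part written in the epsilon-coordinates eps_0, ..., eps_(n-1)
  (only the coordinates below n are relevant).\<close>

type_synonym wt = "real \<times> (nat \<Rightarrow> real) \<times> real"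

definition wadd :: "wt \<Rightarrow> wt \<Rightarrow> wt" where
  "wadd x y = (case x of (a, v, d) \<Rightarrow> case y of (a', v', d') \<Rightarrow> (a + a', \<lambda>i. v i + v' i, d + d'))"

definition wscale :: "real \<Rightarrow> wt \<Rightarrow> wt" where
  "wscale c x = (case x of (a, v, d) \<Rightarrow> (c * a, \<lambda>i. c * v i, c * d))"

definition wsub :: "wt \<Rightarrow> wt \<Rightarrow> wt" where
  "wsub x y = wadd x (wscale (-1) y)"

definition form :: "nat \<Rightarrow> wt \<Rightarrow> wt \<Rightarrow> real" where
  "form n x y = (case x of (a, v, d) \<Rightarrow> case y of (a', v', d') \<Rightarrow>
      (\<Sum>i<n. v i * v' i) + a * d' + d * a')"

definition Lambda0 :: wt where "Lambda0 = (1, \<lambda>_. 0, 0)"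
definition delta :: wt where "delta = (0, \<lambda>_. 0, 1)"

definition eps_diff :: "nat \<Rightarrow> nat \<Rightarrow> wt" where
  "eps_diff i j = (0, \<lambda>t. (if t = i then 1 else 0) - (if t = j then 1 else 0), 0)"

definition theta :: "nat \<Rightarrow> wt" where "theta n = eps_diff 0 (n - 1)"

definition alpha :: "nat \<Rightarrow> nat \<Rightarrow> wt" where
  "alpha n i = (if i = 0 then wsub delta (theta n) else eps_diff (i - 1) i)"

definition real_roots :: "nat \<Rightarrow> wt set" where
  "real_roots n = {wadd (eps_diff i j) (wscale (real_of_int m) delta) | i j m.
                    i < n \<and> j < n \<and> i \<noteq> j}"

definition pos_real_roots :: "nat \<Rightarrow> wt set" where
  "pos_real_roots n = {wadd (eps_diff i j) (wscale (real_of_int m) delta) | i j m.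
                    i < n \<and> j < n \<and> i \<noteq> j \<and> (m > 0 \<or> (m = 0 \<and> i < j))}"

definition coroot :: "nat \<Rightarrow> wt \<Rightarrow> wt" where
  "coroot n \<alpha> = wscale (2 / form n \<alpha> \<alpha>) \<alpha>"

definition refl :: "nat \<Rightarrow> wt \<Rightarrow> wt \<Rightarrow> wt" where
  "refl n \<alpha> x = wsub x (wscale (form n x (coroot n \<alpha>)) \<alpha>)"

definition rho_hat :: "nat \<Rightarrow> wt" where
  "rho_hat n = (real n, \<lambda>i. if i < n then (real n - 1) / 2 - real i else 0, 0)"

definition Delta_int :: "nat \<Rightarrow> wt \<Rightarrow> wt set" where
  "Delta_int n lam = {\<alpha> \<in> real_roots n. form n (wadd lam (rho_hat n)) (coroot n \<alpha>) \<in> \<int>}"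

definition Delta_zero :: "nat \<Rightarrow> wt \<Rightarrow> wt set" where
  "Delta_zero n lam = {\<alpha> \<in> real_roots n. form n (wadd lam (rho_hat n)) (coroot n \<alpha>) = 0}"

definition Delta_int_pos :: "nat \<Rightarrow> wt \<Rightarrow> wt set" where
  "Delta_int_pos n lam = Delta_int n lam \<inter> pos_real_roots n"

text \<open>simple roots of Delta^+(lambda): positive roots that are not a sum of two positive roots
  of the subsystem (Delta(lambda) is closed, so this is the usual basis)\<close>
definition simple_int :: "nat \<Rightarrow> wt \<Rightarrow> wt set" where
  "simple_int n lam = {\<alpha> \<in> Delta_int_pos n lam.
      \<not> (\<exists>\<beta>\<in>Delta_int_pos n lam. \<exists>\<gamma>\<in>Delta_int_pos n lam. \<alpha> = wadd \<beta> \<gamma>)}"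

inductive_set gen_group :: "('a \<Rightarrow> 'a) set \<Rightarrow> ('a \<Rightarrow> 'a) set" for G where
  gen_id: "id \<in> gen_group G"
| gen_step: "g \<in> G \<Longrightarrow> x \<in> gen_group G \<Longrightarrow> g \<circ> x \<in> gen_group G"

definition W_aff :: "nat \<Rightarrow> (wt \<Rightarrow> wt) set" where
  "W_aff n = gen_group {refl n (alpha n i) | i. i < n}"

definition S_aff :: "nat \<Rightarrow> (wt \<Rightarrow> wt) set" where
  "S_aff n = {refl n (alpha n i) | i. i < n}"

definition W_int :: "nat \<Rightarrow> wt \<Rightarrow> (wt \<Rightarrow> wt) set" where
  "W_int n lam = gen_group (refl n ` Delta_int n lam)"

definition W_zero :: "nat \<Rightarrow> wt \<Rightarrow> (wt \<Rightarrow> wt) set" where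
  "W_zero n lam = gen_group (refl n ` Delta_zero n lam)"

definition S_int :: "nat \<Rightarrow> wt \<Rightarrow> (wt \<Rightarrow> wt) set" where
  "S_int n lam = refl n ` simple_int n lam"

definition coxeter_iso :: "(('a \<Rightarrow> 'a) \<Rightarrow> ('a \<Rightarrow> 'a)) \<Rightarrow> ('a \<Rightarrow> 'a) set \<Rightarrow> ('a \<Rightarrow> 'a) set
    \<Rightarrow> ('a \<Rightarrow> 'a) set \<Rightarrow> ('a \<Rightarrow> 'a) set \<Rightarrow> bool" where
  "coxeter_iso \<sigma> W S W' S' \<longleftrightarrow> bij_betw \<sigma> W W' \<and>
      (\<forall>x\<in>W. \<forall>y\<in>W. \<sigma> (x \<circ> y) = \<sigma> x \<circ> \<sigma> y) \<and> \<sigma> ` S = S'"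

end

theory Submission
  imports Defs
begin


definition rt :: "nat \<Rightarrow> nat \<Rightarrow> int \<Rightarrow> wt" where
  "rt i j m = (0, \<lambda>t. (if t = i then 1 else 0) - (if t = j then 1 else 0), real_of_int m)"

lemma form_sym: "form n x y = form n y x"
  by (cases x; cases y) (simp add: form_def mult.commute add.commute add.left_commute)

lemma form_add_l: "form n (wadd x y) z = form n x z + form n y z"
  by (cases x; cases y; cases z) (simp add: form_def wadd_def algebra_simps sum.distrib)

lemma form_scale_l: "form n (wscale c x) z = c * form n x z"
  by (cases x; cases z) (simp add: form_def wscale_def algebra_simps sum_distrib_left)

lemma form_add_r: "form n z (wadd x y) = form n z x + form n z y"
  by (metis form_sym form_add_l)

lemma form_scale_r: "form n z (wscale c x) = c * form n z x"
  by (metis form_sym form_scale_l)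

lemma refl_alt: "refl n a x = wadd x (wscale (- (2 / form n a a * form n x a)) a)"
proof -
  have "wscale (-1) (wscale c a) = wscale (-c) a" for c
    by (cases a) (simp add: wscale_def)
  then show ?thesis by (simp add: refl_def wsub_def coroot_def form_scale_r)
qed

lemma wt_lin1: "wadd (wadd x (wscale p a)) (wscale r a) = wadd x (wscale (p + r) a)"
  by (cases x; cases a) (simp add: wadd_def wscale_def algebra_simps)

lemma wt_zero: "wadd x (wscale 0 a) = x"
  by (cases x; cases a) (simp add: wadd_def wscale_def)

lemma refl_iso: "form n a a \<noteq> 0 \<Longrightarrow> form n (refl n a x) (refl n a y) = form n x y"
  unfolding refl_alt
  by (simp add: form_add_l form_add_r form_scale_l form_scale_r form_sym[of n a x] form_sym[of n a y] field_simps)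

lemma refl_inv: "form n a a \<noteq> 0 \<Longrightarrow> refl n a (refl n a x) = x"
proof -
  assume A: "form n a a \<noteq> 0"
  have "refl n a (refl n a x) = wadd x (wscale ((- (2 / form n a a * form n x a)) +
     (- (2 / form n a a * form n (wadd x (wscale (- (2 / form n a a * form n x a)) a)) a))) a)"
    unfolding refl_alt wt_lin1 ..
  also have "(- (2 / form n a a * form n x a)) +
     (- (2 / form n a a * form n (wadd x (wscale (- (2 / form n a a * form n x a)) a)) a)) = 0"
    using A by (simp add: form_add_l form_scale_l field_simps)
  finally show ?thesis by (simp add: wt_zero)
qed

lemma refl_lin: "refl n a (wadd x (wscale c b)) = wadd (refl n a x) (wscale c (refl n a b))"
proof -
  have H: "wadd (wadd x (wscale c b)) (wscale (p + c*r) a) = wadd (wadd x (wscale p a)) (wscale c (wadd b (wscale r a)))" for p r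
    by (cases x; cases a; cases b) (simp add: wadd_def wscale_def algebra_simps)
  have E: "- (2 / form n a a * form n (wadd x (wscale c b)) a) = 
     (- (2 / form n a a * form n x a)) + c * (- (2 / form n a a * form n b a))"
    by (simp add: form_add_l form_scale_l algebra_simps)
  show ?thesis unfolding refl_alt E H ..
qed

lemma refl_conj: "form n a a \<noteq> 0 \<Longrightarrow> refl n (refl n a b) = refl n a \<circ> refl n b \<circ> refl n a"
proof
  fix x assume A: "form n a a \<noteq> 0"
  have "(refl n a \<circ> refl n b \<circ> refl n a) x = refl n a (refl n b (refl n a x))" by simp
  also have "\<dots> = wadd x (wscale (- (2 / form n b b * form n (refl n a x) b)) (refl n a b))"
    by (subst refl_alt[of n b], subst refl_lin, simp add: refl_inv[OF A])
  also have "form n (refl n a x) b = form n x (refl n a b)"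
    using refl_iso[OF A, of "refl n a x" b] refl_inv[OF A, of x] by simp
  also have "form n b b = form n (refl n a b) (refl n a b)" using refl_iso[OF A] by simp
  finally show "refl n (refl n a b) x = (refl n a \<circ> refl n b \<circ> refl n a) x"
    by (simp add: refl_alt)
qed



definition tr :: "nat \<Rightarrow> nat \<Rightarrow> nat \<Rightarrow> nat" where
  "tr a b t = (if t = a then b else if t = b then a else t)"

lemma sum_ind: "(a::nat) < n \<Longrightarrow> b < n \<Longrightarrow>
  (\<Sum>t<n. v t * ((if t = a then 1 else 0) - (if t = b then 1 else 0))) = v a - (v b :: real)"
proof -
  have "(\<Sum>t<n. v t * ((if t = a then 1 else 0) - (if t = b then 1 else 0))) =
    (\<Sum>t<n. (if t = a then v t else 0)) - (\<Sum>t<n. (if t = b then v t else 0))"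
    by (subst sum_subtractf[symmetric]) (rule sum.cong, auto)
  also assume "a < n" "b < n"
  then have "(\<Sum>t<n. (if t = a then v t else 0)) - (\<Sum>t<n. (if t = b then v t else 0)) = v a - v b"
    using sum.delta[of "{..<n}" a v] sum.delta[of "{..<n}" b v] by simp
  finally show ?thesis .
qed

lemma form_rt_r: "a < n \<Longrightarrow> b < n \<Longrightarrow> form n (c, v, d) (rt a b m) = v a - v b + c * of_int m"
  by (simp add: form_def rt_def sum_ind)

lemma form_rt_rt: "a \<noteq> b \<Longrightarrow> a < n \<Longrightarrow> b < n \<Longrightarrow> form n (rt a b m) (rt a b m) = 2"
proof -
  have e: "rt a b m = (0, (\<lambda>t. (if t = a then 1 else 0) - (if t = b then 1 else 0)), real_of_int m)"
    by (simp add: rt_def)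
  assume "a \<noteq> b" "a < n" "b < n"
  then show ?thesis by (subst (1) e) (simp add: form_rt_r)
qed

lemma coroot_rt: "a \<noteq> b \<Longrightarrow> a < n \<Longrightarrow> b < n \<Longrightarrow> coroot n (rt a b m) = rt a b m"
  by (simp add: coroot_def form_rt_rt) (simp add: wscale_def rt_def)

lemma refl_rt: "a \<noteq> b \<Longrightarrow> a < n \<Longrightarrow> b < n \<Longrightarrow> refl n (rt a b m) (c, v, d) =
   (c, \<lambda>t. v t - (v a - v b + c * of_int m) * ((if t = a then 1 else 0) - (if t = b then 1 else 0)),
    d - (v a - v b + c * of_int m) * of_int m)"
  by (simp add: refl_alt form_rt_rt form_rt_r) (simp add: wadd_def wscale_def rt_def algebra_simps)

lemma refl_rt_tr: "a \<noteq> b \<Longrightarrow> a < n \<Longrightarrow> b < n \<Longrightarrow>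
   refl n (rt a b 0) (rt i j m) = rt (tr a b i) (tr a b j) m"
  unfolding rt_def[of i j m] by (simp add: refl_rt) (auto simp: rt_def tr_def fun_eq_iff)

lemma refl_rt_same: "i \<noteq> j \<Longrightarrow> i < n \<Longrightarrow> j < n \<Longrightarrow>
   refl n (rt i j m) (rt i j m') = rt j i (m' - 2 * m)"
  unfolding rt_def[of i j m'] by (simp add: refl_rt) (auto simp: rt_def fun_eq_iff)

lemma refl_rt_neg: "i \<noteq> j \<Longrightarrow> i < n \<Longrightarrow> j < n \<Longrightarrow>
   refl n (rt j i (-m)) = refl n (rt i j m)"
proof
  fix x assume "i \<noteq> j" "i < n" "j < n"
  then show "refl n (rt j i (-m)) x = refl n (rt i j m) x"
    by (cases x) (simp add: refl_rt fun_eq_iff algebra_simps)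
qed

lemma rt_inj: "rt i j m = rt i' j' m' \<Longrightarrow> i \<noteq> j \<Longrightarrow> i' \<noteq> j' \<Longrightarrow> i = i' \<and> j = j' \<and> m = m'"
  unfolding rt_def by (auto simp: fun_eq_iff split: if_splits; metis)

lemma rt_eq: "wadd (eps_diff i j) (wscale (real_of_int m) delta) = rt i j m"
  by (simp add: wadd_def wscale_def eps_diff_def delta_def rt_def)

lemma alpha0: "n \<ge> 1 \<Longrightarrow> alpha n 0 = rt (n - 1) 0 1"
  by (auto simp: alpha_def wsub_def wadd_def wscale_def delta_def theta_def eps_diff_def rt_def fun_eq_iff)

lemma alphai: "i \<noteq> 0 \<Longrightarrow> alpha n i = rt (i - 1) i 0"
  by (simp add: alpha_def eps_diff_def rt_def)

lemma real_roots_rt: "real_roots n = {rt i j m | i j m. i < n \<and> j < n \<and> i \<noteq> j}"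
  by (simp add: real_roots_def rt_eq)

lemma pos_roots_rt: "pos_real_roots n = {rt i j m | i j m. i < n \<and> j < n \<and> i \<noteq> j \<and> (m > 0 \<or> (m = 0 \<and> i < j))}"
  by (simp add: pos_real_roots_def rt_eq)



lemma gg_comp: "x \<in> gen_group G \<Longrightarrow> y \<in> gen_group G \<Longrightarrow> x \<circ> y \<in> gen_group G"
  by (induction x rule: gen_group.induct) (auto simp: comp_assoc intro: gen_group.intros)

lemma gg_gen: "g \<in> G \<Longrightarrow> g \<in> gen_group G"
  using gen_group.gen_step[OF _ gen_group.gen_id, of g G] by simp

lemma gg_sub: "G \<subseteq> gen_group H \<Longrightarrow> gen_group G \<subseteq> gen_group H"
proof
  fix x assume S: "G \<subseteq> gen_group H" and "x \<in> gen_group G"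
  from this(2) show "x \<in> gen_group H"
  proof (induction x rule: gen_group.induct)
    case gen_id show ?case by (rule gen_group.gen_id)
  next
    case (gen_step g x) show ?case using gg_comp[OF subsetD[OF S gen_step(1)] gen_step(3)] .
  qed
qed

lemma gg_mono: "G \<subseteq> H \<Longrightarrow> gen_group G \<subseteq> gen_group H"
  by (rule gg_sub) (auto intro: gg_gen)

context
  fixes n :: nat
  assumes n3: "n \<ge> 3"
begin

definition Rp :: "wt \<Rightarrow> bool" where "Rp x \<longleftrightarrow> refl n x \<in> W_aff n"

lemma Rp_alpha: "i < n \<Longrightarrow> Rp (alpha n i)"
  unfolding Rp_def W_aff_def by (rule gg_gen) blast

lemma Rp_conj: "Rp a \<Longrightarrow> Rp b \<Longrightarrow> form n a a \<noteq> 0 \<Longrightarrow> Rp (refl n a b)"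
  unfolding Rp_def W_aff_def by (simp add: refl_conj gg_comp)

lemma Rp_neg: "i \<noteq> j \<Longrightarrow> i < n \<Longrightarrow> j < n \<Longrightarrow> Rp (rt j i (-m)) \<Longrightarrow> Rp (rt i j m)"
  unfolding Rp_def by (simp add: refl_rt_neg)

lemma Rp_tr: "Rp (rt a b 0) \<Longrightarrow> Rp (rt i j m) \<Longrightarrow> a \<noteq> b \<Longrightarrow> a < n \<Longrightarrow> b < n
   \<Longrightarrow> Rp (rt (tr a b i) (tr a b j) m)"
  using Rp_conj[of "rt a b 0" "rt i j m"] by (simp add: form_rt_rt refl_rt_tr)

lemma Rp_fin_lt: "j < n \<Longrightarrow> i < j \<Longrightarrow> Rp (rt i j 0)"
proof (induction j arbitrary: i)
  case 0 then show ?case by simp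
next
  case (Suc j)
  have a: "Rp (rt j (Suc j) 0)" using Rp_alpha[of "Suc j"] Suc.prems by (simp add: alphai)
  show ?case
  proof (cases "i = j")
    case True then show ?thesis using a by simp
  next
    case False
    then have "i < j" using Suc.prems by simp
    then have "Rp (rt i j 0)" using Suc by simp
    from Rp_tr[OF a this] Suc.prems \<open>i < j\<close> show ?thesis by (simp add: tr_def)
  qed
qed

lemma Rp_fin: assumes *: "i \<noteq> j" "i < n" "j < n" shows "Rp (rt i j 0)"
proof (cases "i < j")
  case True then show ?thesis using * by (simp add: Rp_fin_lt)
next
  case False
  from * have "Rp (rt j i 0)" using False by (simp add: Rp_fin_lt)
  then show ?thesis using Rp_neg[OF *, of 0] by simp
qed

lemma Rp_pairs:
  assumes "Rp (rt p r m)" "p \<noteq> r" "p < n" "r < n"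
  shows "i \<noteq> j \<Longrightarrow> i < n \<Longrightarrow> j < n \<Longrightarrow> Rp (rt i j m)"
proof -
  have s1: "Rp (rt i r m)" if "i \<noteq> r" "i < n" for i
  proof (cases "i = p")
    case True then show ?thesis using assms by simp
  next
    case False
    from Rp_tr[OF Rp_fin[of p i] assms(1)] False that assms show ?thesis by (simp add: tr_def)
  qed
  assume ij: "i \<noteq> j" "i < n" "j < n"
  show ?thesis
  proof (cases "j = r")
    case True then show ?thesis using s1 ij by simp
  next
    case F: False
    show ?thesis
    proof (cases "i = r")
      case False
      from Rp_tr[OF Rp_fin[of r j] s1[of i]] False F ij assms show ?thesis by (simp add: tr_def)
    next
      case True
      from Rp_tr[OF Rp_fin[of j r] s1[of j]] True F ij assms show ?thesis by (simp add: tr_def)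
    qed
  qed
qed

lemma Rp_all: "i \<noteq> j \<Longrightarrow> i < n \<Longrightarrow> j < n \<Longrightarrow> Rp (rt i j m)"
proof -
  assume ij: "i \<noteq> j" "i < n" "j < n"
  have a0: "Rp (rt (n - 1) 0 1)" using Rp_alpha[of 0] n3 by (simp add: alpha0)
  have one: "Rp (rt i j 1)" by (rule Rp_pairs[OF a0]) (use n3 ij in auto)
  have step: "Rp (rt i j (2 * m - m'))" if "Rp (rt i j m)" "Rp (rt i j m')" for m m'
  proof -
    have "Rp (rt j i (m' - 2 * m))"
      using Rp_conj[OF that] ij by (simp add: form_rt_rt refl_rt_same)
    then show ?thesis using Rp_neg[OF ij, of "2 * m - m'"] by simp
  qed
  have "Rp (rt i j m) \<and> Rp (rt i j (m + 1))"
  proof (induction m rule: int_induct[where k = 0])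
    case base then show ?case using Rp_fin[OF ij] one by simp
  next
    case (step1 m)
    then show ?case using step[of "m" "m + 1"] step[of "m + 1" m] by (simp add: algebra_simps)
  next
    case (step2 m)
    then show ?case using step[of "m" "m + 1"] by (simp add: algebra_simps)
  qed
  then show ?thesis by simp
qed

lemma W_aff_roots: "gen_group (refl n ` real_roots n) = W_aff n"
proof
  show "gen_group (refl n ` real_roots n) \<subseteq> W_aff n"
    unfolding W_aff_def
    by (rule gg_sub) (use Rp_all in \<open>auto simp: real_roots_rt Rp_def W_aff_def\<close>)
  show "W_aff n \<subseteq> gen_group (refl n ` real_roots n)"
    unfolding W_aff_def
  proof (rule gg_mono, safe)
    fix i assume "i < n"
    show "refl n (alpha n i) \<in> refl n ` real_roots n"
    proof (cases "i = 0")
      case True then show ?thesis using n3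
    proof (intro image_eqI[of _ _ "rt (n-1) 0 1"])
      show "rt (n - 1) 0 1 \<in> real_roots n" unfolding real_roots_rt
        by (rule CollectI, rule exI[of _ "n-1"], rule exI[of _ 0], rule exI[of _ 1]) (use n3 in auto)
    qed (use n3 True in \<open>simp add: alpha0\<close>)
    next
      case False
      show ?thesis
      proof (intro image_eqI[of _ _ "rt (i-1) i 0"])
        show "rt (i-1) i 0 \<in> real_roots n" unfolding real_roots_rt
          by (rule CollectI, rule exI[of _ "i-1"], rule exI[of _ i], rule exI[of _ 0]) (use False \<open>i < n\<close> in auto)
      qed (use False in \<open>simp add: alphai\<close>)
    qed
  qed
qed

end


definition Tq :: "nat \<Rightarrow> wt \<Rightarrow> wt" where
  "Tq q x = (case x of (a, v, d) \<Rightarrow> (a / real q, v, real q * d))"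
definition Ti :: "nat \<Rightarrow> wt \<Rightarrow> wt" where
  "Ti q x = (case x of (a, v, d) \<Rightarrow> (real q * a, v, d / real q))"
definition sig :: "nat \<Rightarrow> (wt \<Rightarrow> wt) \<Rightarrow> (wt \<Rightarrow> wt)" where
  "sig q w = Tq q \<circ> w \<circ> Ti q"

lemma TTi: "q \<ge> 1 \<Longrightarrow> Tq q (Ti q x) = x"
  by (cases x) (simp add: Tq_def Ti_def)
lemma TiT: "q \<ge> 1 \<Longrightarrow> Ti q (Tq q x) = x"
  by (cases x) (simp add: Tq_def Ti_def)
lemma form_Ti: "q \<ge> 1 \<Longrightarrow> form n (Ti q x) y = form n x (Tq q y)"
  by (cases x; cases y) (simp add: Tq_def Ti_def form_def)
lemma form_TT: "q \<ge> 1 \<Longrightarrow> form n (Tq q x) (Tq q y) = form n x y"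
  using form_Ti[of q n "Tq q x" y] TiT[of q x] by simp
lemma T_wadd: "Tq q (wadd x y) = wadd (Tq q x) (Tq q y)"
  by (cases x; cases y) (simp add: Tq_def wadd_def add_divide_distrib algebra_simps)
lemma T_wscale: "Tq q (wscale c x) = wscale c (Tq q x)"
  by (cases x) (simp add: Tq_def wscale_def)
lemma T_inj: "q \<ge> 1 \<Longrightarrow> inj (Tq q)"
  by (metis TiT injI)

lemma sig_refl: "q \<ge> 1 \<Longrightarrow> sig q (refl n a) = refl n (Tq q a)"
proof
  fix x assume q: "q \<ge> 1"
  show "sig q (refl n a) x = refl n (Tq q a) x"
    unfolding sig_def comp_def refl_alt[of n a] T_wadd T_wscale TTi[OF q] form_Ti[OF q]
    by (simp add: refl_alt form_TT[OF q])
qed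

lemma sig_comp: "q \<ge> 1 \<Longrightarrow> sig q (f \<circ> g) = sig q f \<circ> sig q g"
  by (simp add: sig_def fun_eq_iff TiT)
lemma sig_id: "q \<ge> 1 \<Longrightarrow> sig q id = id"
  by (simp add: sig_def fun_eq_iff TTi)
lemma sig_inj: "q \<ge> 1 \<Longrightarrow> inj (sig q)"
proof (rule injI)
  fix f g assume q: "q \<ge> 1" and "sig q f = sig q g"
  then have "Ti q \<circ> sig q f \<circ> Tq q = Ti q \<circ> sig q g \<circ> Tq q" by simp
  then show "f = g" by (simp add: sig_def fun_eq_iff TiT[OF q])
qed

lemma sig_gg: assumes q: "q \<ge> 1" shows "sig q ` gen_group G = gen_group (sig q ` G)"
proof
  show "sig q ` gen_group G \<subseteq> gen_group (sig q ` G)"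
  proof
    fix y assume "y \<in> sig q ` gen_group G"
    then obtain x where x: "x \<in> gen_group G" "y = sig q x" by blast
    from x(1) have "sig q x \<in> gen_group (sig q ` G)"
    proof (induction x rule: gen_group.induct)
      case gen_id show ?case by (simp only: sig_id[OF q]) (rule gen_group.gen_id)
    next
      case (gen_step g x) then show ?case by (simp only: sig_comp[OF q]) (rule gen_group.gen_step, auto)
    qed
    then show "y \<in> gen_group (sig q ` G)" using x by simp
  qed
  show "gen_group (sig q ` G) \<subseteq> sig q ` gen_group G"
  proof
    fix y assume "y \<in> gen_group (sig q ` G)"
    then show "y \<in> sig q ` gen_group G"
    proof (induction y rule: gen_group.induct)
      case gen_id show ?case using sig_id[OF q] gen_group.gen_id by (metis image_eqI)
    next
      case (gen_step g x)
      then obtain g' x' where "g' \<in> G" "g = sig q g'" "x' \<in> gen_group G" "x = sig q x'" by blast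
      then show ?case using sig_comp[OF q, of g' x'] gen_group.gen_step[of g' G x']
        by (metis image_eqI)
    qed
  qed
qed

lemma T_rt: "Tq q (rt i j m) = rt i j (int q * m)"
  by (simp add: Tq_def rt_def)

lemma form_lam: "i \<noteq> j \<Longrightarrow> i < n \<Longrightarrow> j < n \<Longrightarrow>
  form n (wadd (wscale k Lambda0) (rho_hat n)) (coroot n (rt i j m)) = real j - real i + (k + real n) * of_int m"
  by (simp add: coroot_rt wadd_def wscale_def Lambda0_def rho_hat_def form_rt_r)



lemma dvd_char:
  fixes m :: int
  assumes q: "q \<ge> 1" and g: "gcd q (n - 1) = 1"
  shows "(real (n - 1) / real q * of_int m \<in> \<int>) \<longleftrightarrow> int q dvd m"
proof
  assume "int q dvd m"
  then obtain m' where "m = int q * m'" by blast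
  then have "real (n - 1) / real q * of_int m = of_int (int (n - 1) * m')" using q by simp
  then show "real (n - 1) / real q * of_int m \<in> \<int>" by simp
next
  assume "real (n - 1) / real q * of_int m \<in> \<int>"
  then obtain z where z: "real (n - 1) / real q * of_int m = of_int z" by (auto elim: Ints_cases)
  then have "real_of_int (int (n - 1) * m) = real_of_int (int q * z)" using q
    by (simp add: field_simps)
  then have "int (n - 1) * m = int q * z" by (simp only: of_int_eq_iff)
  then have "int q dvd int (n - 1) * m" by (metis dvd_triv_left)
  moreover have "coprime (int q) (int (n - 1))" using g by (simp add: coprime_iff_gcd_eq_1)
  ultimately show "int q dvd m" by (simp add: coprime_dvd_mult_left_iff coprime_dvd_mult_right_iff)
qed

lemma Ints_shift: "i < n \<Longrightarrow> j < n \<Longrightarrow> (real j - real i + r \<in> \<int>) \<longleftrightarrow> r \<in> \<int>"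
proof
  assume "real j - real i + r \<in> \<int>"
  then have "(real j - real i + r) - (real j - real i) \<in> \<int>" by (intro Ints_diff) auto
  then show "r \<in> \<int>" by simp
qed auto

context
  fixes n q :: nat and k :: real
  assumes n3: "n \<ge> 3" and q: "q \<ge> 1" and g: "gcd q (n - 1) = 1"
    and k: "k = - real n + real (n - 1) / real q"
begin

lemma kn: "k + real n = real (n - 1) / real q" using k by simp

lemma Delta_int_k: "Delta_int n (wscale k Lambda0) = Tq q ` real_roots n"
proof (intro set_eqI iffI)
  fix x assume "x \<in> Delta_int n (wscale k Lambda0)"
  then obtain i j m where x: "x = rt i j m" "i < n" "j < n" "i \<noteq> j"
    and I: "form n (wadd (wscale k Lambda0) (rho_hat n)) (coroot n (rt i j m)) \<in> \<int>"
    unfolding Delta_int_def real_roots_rt by blast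
  from I x have "real (n - 1) / real q * of_int m \<in> \<int>"
    by (simp add: form_lam kn Ints_shift)
  then obtain m' where "m = int q * m'" using dvd_char[OF q g] by blast
  then have "x = Tq q (rt i j m')" using x by (simp add: T_rt)
  moreover have "rt i j m' \<in> real_roots n" unfolding real_roots_rt using x by blast
  ultimately show "x \<in> Tq q ` real_roots n" by blast
next
  fix x assume "x \<in> Tq q ` real_roots n"
  then obtain i j m where x: "x = rt i j (int q * m)" "i < n" "j < n" "i \<noteq> j"
    unfolding real_roots_rt by (auto simp: T_rt)
  have "real (n - 1) / real q * of_int (int q * m) \<in> \<int>"
    using dvd_char[OF q g] by simp
  then have "form n (wadd (wscale k Lambda0) (rho_hat n)) (coroot n x) \<in> \<int>"
    using x by (simp add: form_lam kn Ints_shift del: of_int_mult)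
  moreover have "x \<in> real_roots n" unfolding real_roots_rt using x by blast
  ultimately show "x \<in> Delta_int n (wscale k Lambda0)" unfolding Delta_int_def by blast
qed

lemma Delta_zero_k: "Delta_zero n (wscale k Lambda0) = Tq q ` Delta_zero n (wscale (-1) Lambda0)"
proof (intro set_eqI iffI)
  fix x assume "x \<in> Delta_zero n (wscale k Lambda0)"
  then obtain i j m where x: "x = rt i j m" "i < n" "j < n" "i \<noteq> j"
    and I: "form n (wadd (wscale k Lambda0) (rho_hat n)) (coroot n (rt i j m)) = 0"
    unfolding Delta_zero_def real_roots_rt by blast
  from I x have e: "real j - real i + real (n - 1) / real q * of_int m = 0"
    by (simp add: form_lam kn)
  then have "real (n - 1) / real q * of_int m = real i - real j" by simp
  then have "real (n - 1) / real q * of_int m \<in> \<int>" by simp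
  then obtain m' where m: "m = int q * m'" using dvd_char[OF q g] by blast
  then have "x = Tq q (rt i j m')" using x by (simp add: T_rt)
  moreover have "form n (wadd (wscale (-1) Lambda0) (rho_hat n)) (coroot n (rt i j m')) = 0"
    using x e m q by (simp add: form_lam)
  then have "rt i j m' \<in> Delta_zero n (wscale (-1) Lambda0)"
    unfolding Delta_zero_def real_roots_rt using x by blast
  ultimately show "x \<in> Tq q ` Delta_zero n (wscale (-1) Lambda0)" by blast
next
  fix x assume "x \<in> Tq q ` Delta_zero n (wscale (-1) Lambda0)"
  then obtain i j m where x: "x = rt i j (int q * m)" "i < n" "j < n" "i \<noteq> j"
    and I: "form n (wadd (wscale (-1) Lambda0) (rho_hat n)) (coroot n (rt i j m)) = 0"
    unfolding real_roots_rt Delta_zero_def by (auto simp: T_rt)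
  have "form n (wadd (wscale k Lambda0) (rho_hat n)) (coroot n x) = 0"
    using x I q by (simp add: form_lam kn)
  moreover have "x \<in> real_roots n" unfolding real_roots_rt using x by blast
  ultimately show "x \<in> Delta_zero n (wscale k Lambda0)" unfolding Delta_zero_def by blast
qed

end


definition ht :: "nat \<Rightarrow> wt \<Rightarrow> real" where
  "ht n x = (case x of (c, v, d) \<Rightarrow> real n * d - (\<Sum>t<n. real t * v t))"

lemma ht_add: "ht n (wadd x y) = ht n x + ht n y"
  by (cases x; cases y) (simp add: ht_def wadd_def algebra_simps sum.distrib)

lemma ht_rt: "a < n \<Longrightarrow> b < n \<Longrightarrow> ht n (rt a b m) = real n * of_int m - real a + real b"
  using sum_ind[of a n b real] by (simp add: ht_def rt_def mult.commute)

lemma rt_add: "wadd (rt a c m1) (rt c b m2) = rt a b (m1 + m2)"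
  by (simp add: wadd_def rt_def fun_eq_iff)

lemma PR_mem: "i < n \<Longrightarrow> j < n \<Longrightarrow> i \<noteq> j \<Longrightarrow> (m > 0 \<or> (m = 0 \<and> i < j)) \<Longrightarrow> rt i j m \<in> pos_real_roots n"
  unfolding pos_roots_rt by blast

lemma PR_ht: "x \<in> pos_real_roots n \<Longrightarrow> ht n x \<ge> 1"
proof -
  assume "x \<in> pos_real_roots n"
  then obtain i j m where x: "x = rt i j m" "i < n" "j < n" "i \<noteq> j" "m > 0 \<or> (m = 0 \<and> i < j)"
    unfolding pos_roots_rt by blast
  show ?thesis
  proof (cases "m > 0")
    case True
    then have "of_int m \<ge> (1::real)" by simp
    then have "real n * of_int m \<ge> real n * 1" by (intro mult_left_mono) simp_all
    moreover have "real i + 1 \<le> real n" using x by linarith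
    moreover have "ht n x = real n * of_int m - real i + real j" using x by (simp add: ht_rt)
    ultimately show ?thesis by linarith
  next
    case False then show ?thesis using x by (simp add: ht_rt)
  qed
qed

context
  fixes n :: nat
  assumes n3: "n \<ge> 3"
begin

lemma alpha_PR: "i < n \<Longrightarrow> alpha n i \<in> pos_real_roots n"
  using n3 by (cases "i = 0") (auto simp: alpha0 alphai intro!: PR_mem)

lemma alpha_ht: "i < n \<Longrightarrow> ht n (alpha n i) = 1"
  using n3 by (cases "i = 0") (auto simp: alpha0 alphai ht_rt)

lemma indec: "{x \<in> pos_real_roots n. \<not> (\<exists>y\<in>pos_real_roots n. \<exists>z\<in>pos_real_roots n. x = wadd y z)}
   = {alpha n i | i. i < n}"
proof (intro set_eqI iffI)
  fix x assume "x \<in> {alpha n i | i. i < n}"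
  then obtain i where i: "x = alpha n i" "i < n" by blast
  have "\<not> (\<exists>y\<in>pos_real_roots n. \<exists>z\<in>pos_real_roots n. x = wadd y z)"
  proof
    assume "\<exists>y\<in>pos_real_roots n. \<exists>z\<in>pos_real_roots n. x = wadd y z"
    then obtain y z where "y \<in> pos_real_roots n" "z \<in> pos_real_roots n" "x = wadd y z" by blast
    then have "ht n x \<ge> 2" using PR_ht[of y n] PR_ht[of z n] by (simp add: ht_add)
    then show False using alpha_ht i by simp
  qed
  then show "x \<in> {x \<in> pos_real_roots n. \<not> (\<exists>y\<in>pos_real_roots n. \<exists>z\<in>pos_real_roots n. x = wadd y z)}"
    using alpha_PR i by blast
next
  fix x assume A: "x \<in> {x \<in> pos_real_roots n. \<not> (\<exists>y\<in>pos_real_roots n. \<exists>z\<in>pos_real_roots n. x = wadd y z)}"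
  then obtain a b m where x: "x = rt a b m" "a < n" "b < n" "a \<noteq> b" "m > 0 \<or> (m = 0 \<and> a < b)"
    unfolding pos_roots_rt by blast
  have nd: "\<not> (\<exists>y\<in>pos_real_roots n. \<exists>z\<in>pos_real_roots n. x = wadd y z)" using A by blast
  have dec: False if "rt a c m1 \<in> pos_real_roots n" "rt c b m2 \<in> pos_real_roots n" "m1 + m2 = m" for c m1 m2
  proof -
    have "x = wadd (rt a c m1) (rt c b m2)" using that(3) x(1) by (simp add: rt_add)
    then show False using nd that(1,2) by blast
  qed
  show "x \<in> {alpha n i | i. i < n}"
  proof (cases "m = 0")
    case m0: True
    then have ab: "a < b" using x by simp
    show ?thesis
    proof (cases "b = Suc a")
      case True
      then have "x = alpha n b" using x m0 by (simp add: alphai)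
      then show ?thesis using x by blast
    next
      case False
      have False by (rule dec[of "Suc a" 0 0]; (intro PR_mem)?) (use \<open>b \<noteq> Suc a\<close> ab x m0 in simp_all)
      then show ?thesis ..
    qed
  next
    case mp: False
    then have m: "m > 0" using x by simp
    show ?thesis
    proof (cases "a < b")
      case True
      obtain c where c: "c < 3" "c \<noteq> a" "c \<noteq> b"
      proof (cases "a \<noteq> 0 \<and> b \<noteq> 0")
        case True then show ?thesis using that[of 0] by simp
      next
        case F1: False
        show ?thesis
        proof (cases "a \<noteq> 1 \<and> b \<noteq> 1")
          case True then show ?thesis using that[of 1] by simp
        next
          case False then show ?thesis using that[of 2] F1 \<open>a \<noteq> b\<close> x(4) by auto
        qed
      qed
      have "c < n" using c n3 by simp
      have False
      proof (cases "a < c")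
        case True
        show False by (rule dec[of c 0 m]; (intro PR_mem)?) (use c \<open>c < n\<close> \<open>a < c\<close> x m in simp_all)
      next
        case False
        show False by (rule dec[of c m 0]; (intro PR_mem)?) (use c \<open>c < n\<close> x m \<open>a < b\<close> \<open>\<not> a < c\<close> in auto)
      qed
      then show ?thesis ..
    next
      case False
      then have ba: "b < a" using x by simp
      show ?thesis
      proof (cases "a < n - 1")
        case True
        have False by (rule dec[of "n - 1" 0 m]; (intro PR_mem)?) (use x m ba n3 \<open>a < n - 1\<close> in auto)
        then show ?thesis ..
      next
        case False
        then have an: "a = n - 1" using x by simp
        show ?thesis
        proof (cases "b > 0")
          case True
          have False by (rule dec[of 0 m 0]; (intro PR_mem)?) (use x m an n3 \<open>b > 0\<close> in auto)
          then show ?thesis ..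
        next
          case False
          then have b0: "b = 0" by simp
          show ?thesis
          proof (cases "m = 1")
            case True
            then have "x = alpha n 0" using x an b0 n3 by (simp add: alpha0)
            then show ?thesis using n3 by auto
          next
            case False
            have False by (rule dec[of 1 1 "m - 1"]; (intro PR_mem)?) (use x m an b0 n3 \<open>m \<noteq> 1\<close> in auto)
            then show ?thesis ..
          qed
        qed
      qed
    qed
  qed
qed

end


lemma img_indec:
  assumes "inj f" "\<And>x y. f (wadd x y) = wadd (f x) (f y)"
  shows "{x \<in> f ` P. \<not> (\<exists>y\<in>f ` P. \<exists>z\<in>f ` P. x = wadd y z)} =
         f ` {x \<in> P. \<not> (\<exists>y\<in>P. \<exists>z\<in>P. x = wadd y z)}"
proof -
  have e: "f x = wadd (f y) (f z) \<longleftrightarrow> x = wadd y z" for x y z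
    by (simp only: assms(2)[symmetric] inj_eq[OF assms(1)])
  show ?thesis
  proof (intro set_eqI iffI)
    fix x assume A: "x \<in> {x \<in> f ` P. \<not> (\<exists>y\<in>f ` P. \<exists>z\<in>f ` P. x = wadd y z)}"
    then obtain x' where x': "x = f x'" "x' \<in> P" by blast
    have "\<not> (\<exists>y\<in>P. \<exists>z\<in>P. x' = wadd y z)"
    proof
      assume "\<exists>y\<in>P. \<exists>z\<in>P. x' = wadd y z"
      then obtain y z where "y \<in> P" "z \<in> P" "x' = wadd y z" by blast
      then have "f y \<in> f ` P" "f z \<in> f ` P" "x = wadd (f y) (f z)" using e x' by auto
      then show False using A by blast
    qed
    then show "x \<in> f ` {x \<in> P. \<not> (\<exists>y\<in>P. \<exists>z\<in>P. x = wadd y z)}" using x' by blast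
  next
    fix x assume "x \<in> f ` {x \<in> P. \<not> (\<exists>y\<in>P. \<exists>z\<in>P. x = wadd y z)}"
    then obtain x' where x': "x = f x'" "x' \<in> P" and N: "\<not> (\<exists>y\<in>P. \<exists>z\<in>P. x' = wadd y z)" by blast
    have "\<not> (\<exists>y\<in>f ` P. \<exists>z\<in>f ` P. x = wadd y z)"
    proof
      assume "\<exists>y\<in>f ` P. \<exists>z\<in>f ` P. x = wadd y z"
      then obtain y z where "y \<in> P" "z \<in> P" "x = wadd (f y) (f z)" by blast
      then have "x' = wadd y z" using e x' by simp
      then show False using N \<open>y \<in> P\<close> \<open>z \<in> P\<close> by blast
    qed
    then show "x \<in> {x \<in> f ` P. \<not> (\<exists>y\<in>f ` P. \<exists>z\<in>f ` P. x = wadd y z)}" using x' by blast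
  qed
qed

lemma posk: assumes q: "q \<ge> 1" shows "Tq q ` real_roots n \<inter> pos_real_roots n = Tq q ` pos_real_roots n"
proof (intro set_eqI iffI)
  fix x assume "x \<in> Tq q ` real_roots n \<inter> pos_real_roots n"
  then have A: "x \<in> Tq q ` real_roots n" "x \<in> pos_real_roots n" by auto
  from A(1) obtain i j m where x: "x = Tq q (rt i j m)" "i < n" "j < n" "i \<noteq> j"
    unfolding real_roots_rt by blast
  from A(2) obtain i' j' m' where y: "x = rt i' j' m'" "i' < n" "j' < n" "i' \<noteq> j'" "m' > 0 \<or> (m' = 0 \<and> i' < j')"
    unfolding pos_roots_rt by blast
  have "rt i j (int q * m) = rt i' j' m'" using x(1) y(1) by (simp add: T_rt)
  then have e: "i = i'" "j = j'" "int q * m = m'" using rt_inj x(4) y(4) by blast+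
  have "m > 0 \<or> (m = 0 \<and> i < j)"
  proof (cases "m' > 0")
    case True
    then have "int q * m > 0" using e by simp
    then show ?thesis using q by (simp add: zero_less_mult_iff)
  next
    case False
    then have "m' = 0" "i' < j'" using y(5) by auto
    then show ?thesis using e q by simp
  qed
  then have "rt i j m \<in> pos_real_roots n" using x by (intro PR_mem) auto
  then show "x \<in> Tq q ` pos_real_roots n" using x by blast
next
  fix x assume "x \<in> Tq q ` pos_real_roots n"
  then obtain i j m where x: "x = Tq q (rt i j m)" "i < n" "j < n" "i \<noteq> j" "m > 0 \<or> (m = 0 \<and> i < j)"
    unfolding pos_roots_rt by blast
  have "rt i j m \<in> real_roots n" unfolding real_roots_rt using x by blast
  then have X1: "x \<in> Tq q ` real_roots n" using x(1) by blast
  have "int q * m > 0 \<or> (int q * m = 0 \<and> i < j)" using x(5) q by auto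
  then have "rt i j (int q * m) \<in> pos_real_roots n" using x by (intro PR_mem) auto
  then have "x \<in> pos_real_roots n" using x(1) by (simp add: T_rt)
  then show "x \<in> Tq q ` real_roots n \<inter> pos_real_roots n" using X1 by blast
qed

lemma refl_T_img: "q \<ge> 1 \<Longrightarrow> refl n ` Tq q ` A = sig q ` refl n ` A"
  by (simp add: image_image sig_refl)

theorem mainTheorem6:
  fixes n q :: nat and k :: real and beta0 :: wt
  assumes "n \<ge> 3" and "q \<ge> 1" and "gcd q (n - 1) = 1"
    and "k = - real n + real (n - 1) / real q"
    and "beta0 = wsub (wscale (real q) delta) (theta n)"
  shows "\<exists>\<sigma>. coxeter_iso \<sigma> (W_aff n) (S_aff n) (W_int n (wscale k Lambda0)) (S_int n (wscale k Lambda0))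
           \<and> \<sigma> (refl n (alpha n 0)) = refl n beta0
           \<and> (\<forall>i\<in>{1..n-1}. \<sigma> (refl n (alpha n i)) = refl n (alpha n i))
           \<and> \<sigma> ` W_zero n (wscale (-1) Lambda0) = W_zero n (wscale k Lambda0)"
proof (intro exI conjI)
  note n3 = assms(1) and q = assms(2)
  have Wint: "W_int n (wscale k Lambda0) = sig q ` W_aff n"
    unfolding W_int_def Delta_int_k[OF assms(1-4)] refl_T_img[OF q] sig_gg[OF q, symmetric] W_aff_roots[OF n3] ..
  have Dpos: "Delta_int_pos n (wscale k Lambda0) = Tq q ` pos_real_roots n"
    unfolding Delta_int_pos_def Delta_int_k[OF assms(1-4)] posk[OF q] ..
  have simp_k: "simple_int n (wscale k Lambda0) = Tq q ` {alpha n i | i. i < n}"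
    unfolding simple_int_def Dpos img_indec[OF T_inj[OF q] T_wadd] indec[OF n3] ..
  have Saff: "S_aff n = refl n ` {alpha n i | i. i < n}" unfolding S_aff_def by blast
  have Sint: "S_int n (wscale k Lambda0) = sig q ` S_aff n"
    unfolding S_int_def simp_k Saff refl_T_img[OF q] ..
  show "coxeter_iso (sig q) (W_aff n) (S_aff n) (W_int n (wscale k Lambda0)) (S_int n (wscale k Lambda0))"
    unfolding coxeter_iso_def
  proof (intro conjI ballI)
    show "bij_betw (sig q) (W_aff n) (W_int n (wscale k Lambda0))"
      unfolding bij_betw_def Wint using sig_inj[OF q] by (auto intro: inj_on_subset)
    show "sig q (x \<circ> y) = sig q x \<circ> sig q y" for x y using sig_comp[OF q] .
    show "sig q ` S_aff n = S_int n (wscale k Lambda0)" using Sint ..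
  qed
  have b0: "beta0 = rt (n - 1) 0 (int q)" using assms(5) n3
    by (auto simp: wsub_def wadd_def wscale_def delta_def theta_def eps_diff_def rt_def fun_eq_iff)
  show "sig q (refl n (alpha n 0)) = refl n beta0"
    using n3 by (simp add: sig_refl[OF q] alpha0 T_rt b0)
  show "\<forall>i\<in>{1..n-1}. sig q (refl n (alpha n i)) = refl n (alpha n i)"
    by (auto simp: sig_refl[OF q] alphai T_rt)
  show "sig q ` W_zero n (wscale (-1) Lambda0) = W_zero n (wscale k Lambda0)"
    unfolding W_zero_def Delta_zero_k[OF assms(1-4)] refl_T_img[OF q] sig_gg[OF q, symmetric] ..
qed

end
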